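(* Let $k\ge1$. For all $0\le y_1\le y_2\le\dots\le y_{2k-1}\le1$ we have $\widetilde H_k(y_1,\dots,y_{2k-1})\le0$, where \[ \widetilde H_k(y_1,\dots,y_{2k-1}):=\sum_{i=0}^{k-1}(1-y_{k+i})\,y_{k+i+1}\cdots y_{2k-1}\;f_k(y_1)\cdots f_k(y_i)\;-\;\prod_{i=1}^{k}f_k(y_i), \] with empty products equal to $1$.
   Context: For an integer $k\ge1$, $f_k:[0,1]\to[0,1]$ denotes the unique decreasing function satisfying $f_k(x)^k-f_k(x)^{k+1}=x^k-x^{k+1}$ for all $x\in[0,1]$; it is continuous with $f_k(0)=1$, $f_k(1)=0$. *)

theory Defs
  imports "HOL-Analysis.Analysis"
begin

text \<open>f_k: the unique decreasing function [0,1] -> [0,1] with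
  f(x)^k - f(x)^(k+1) = x^k - x^(k+1); extended by 0 outside [0,1] to make it unique as a HOL function.\<close>
definition fk :: "nat \<Rightarrow> real \<Rightarrow> real" where
  "fk k = (THE g. (\<forall>x\<in>{0..1}. g x \<in> {0..1} \<and> g x ^ k - g x ^ (k+1) = x ^ k - x ^ (k+1))
                 \<and> antimono_on {0..1} g \<and> (\<forall>x. x \<notin> {0..1} \<longrightarrow> g x = 0))"

definition Htilde :: "nat \<Rightarrow> (nat \<Rightarrow> real) \<Rightarrow> real" where
  "Htilde k y = (\<Sum>i=0..k-1. (1 - y (k+i)) * (\<Prod>j=k+i+1..2*k-1. y j) * (\<Prod>j=1..i. fk k (y j)))
                - (\<Prod>i=1..k. fk k (y i))"

end

theory Submission
  imports Defs
begin


definition Dsum :: "(nat \<Rightarrow> real) \<Rightarrow> (nat \<Rightarrow> real) \<Rightarrow> nat \<Rightarrow> real" where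
  "Dsum z A n = (\<Sum>i<n. (1 - z i) * (\<Prod>m\<in>{i+1..<n}. z m) * A i)"

fun Tseq :: "real \<Rightarrow> (nat \<Rightarrow> real) \<Rightarrow> nat \<Rightarrow> real" where
  "Tseq x A 0 = 0"
| "Tseq x A (Suc j) = x * Tseq x A j + (1 - x) * A j"

lemma Dsum_Suc: "Dsum z A (Suc j) = z j * Dsum z A j + (1 - z j) * A j"
proof -
  have "(\<Sum>i<j. (1 - z i) * (\<Prod>m\<in>{i+1..<Suc j}. z m) * A i)
      = (\<Sum>i<j. z j * ((1 - z i) * (\<Prod>m\<in>{i+1..<j}. z m) * A i))"
  proof (rule sum.cong)
    fix i assume "i \<in> {..<j}"
    then have "i + 1 \<le> j" by simp
    then have "(\<Prod>m\<in>{i+1..<Suc j}. z m) = (\<Prod>m\<in>{i+1..<j}. z m) * z j"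
      by (rule prod.atLeastLessThan_Suc)
    then show "(1 - z i) * (\<Prod>m\<in>{i+1..<Suc j}. z m) * A i = z j * ((1 - z i) * (\<Prod>m\<in>{i+1..<j}. z m) * A i)"
      by simp
  qed simp
  then show ?thesis
    unfolding Dsum_def by (simp add: sum_distrib_left)
qed

lemma Dsum_le_T:
  assumes "\<And>i. i < n \<Longrightarrow> x \<le> z i \<and> z i \<le> 1"
    and "\<And>j. j < n \<Longrightarrow> Tseq x A j \<le> A j"
    and "0 \<le> x"
  shows "Dsum z A n \<le> Tseq x A n"
  using assms
proof (induction n)
  case 0
  then show ?case by (simp add: Dsum_def)
next
  case (Suc n)
  have IH: "Dsum z A n \<le> Tseq x A n" using Suc by auto
  have z: "x \<le> z n" "z n \<le> 1" using Suc.prems(1)[of n] by auto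
  have TA: "Tseq x A n \<le> A n" using Suc.prems(2)[of n] by auto
  have "Dsum z A (Suc n) = z n * Dsum z A n + (1 - z n) * A n" by (rule Dsum_Suc)
  also have "\<dots> \<le> z n * Tseq x A n + (1 - z n) * A n"
    using IH z \<open>0 \<le> x\<close> by (intro add_mono mult_left_mono) auto
  also have "\<dots> = Tseq x A n + (1 - z n) * (A n - Tseq x A n)" by (simp add: algebra_simps)
  also have "\<dots> \<le> Tseq x A n + (1 - x) * (A n - Tseq x A n)"
    using z TA by (intro add_left_mono mult_right_mono) auto
  also have "\<dots> = Tseq x A (Suc n)" by (simp add: algebra_simps)
  finally show ?case .
qed

definition Sseq :: "real \<Rightarrow> real \<Rightarrow> nat \<Rightarrow> real" where
  "Sseq x p n = (1 - x) * (\<Sum>m<n. x ^ m / p ^ (m+1))"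

lemma T_le_AS:
  assumes p: "0 < p" and x: "0 \<le> x" "x \<le> 1"
    and ph: "\<And>i. 1 \<le> i \<Longrightarrow> i \<le> n \<Longrightarrow> p \<le> ph i"
  shows "Tseq x (\<lambda>j. \<Prod>i=1..j. ph i) n \<le> (\<Prod>i=1..n. ph i) * Sseq x p n"
  using ph
proof (induction n)
  case 0
  then show ?case by (simp add: Sseq_def)
next
  case (Suc n)
  define A where "A = (\<lambda>j. \<Prod>i=1..j. ph i)"
  have IH: "Tseq x A n \<le> A n * Sseq x p n" using Suc unfolding A_def by auto
  have A0: "0 \<le> A n" unfolding A_def using Suc.prems p
    by (intro prod_nonneg) (metis atLeastAtMost_iff le_SucI less_le_trans order.strict_implies_order)
  have pn: "p \<le> ph (Suc n)" using Suc.prems by auto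
  have S0: "0 \<le> Sseq x p (Suc n)" unfolding Sseq_def using x p
    by (intro mult_nonneg_nonneg sum_nonneg) auto
  have AS: "A (Suc n) = A n * ph (Suc n)" unfolding A_def by (simp add: prod.nat_ivl_Suc')
  have key: "p * Sseq x p (Suc n) = (1 - x) + x * Sseq x p n"
  proof -
    define Q where "Q = (\<Sum>m<n. x ^ m / p ^ (m+1))"
    have "(\<Sum>m<Suc n. x ^ m / p ^ (m+1)) = 1 / p + (\<Sum>m<n. x ^ (Suc m) / p ^ (Suc m + 1))"
      by (subst sum.lessThan_Suc_shift) simp
    also have "(\<Sum>m<n. x ^ (Suc m) / p ^ (Suc m + 1)) = (x / p) * Q"
      unfolding Q_def by (simp add: sum_distrib_left)
    finally have e: "(\<Sum>m<Suc n. x ^ m / p ^ (m+1)) = 1 / p + (x / p) * Q" .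
    have "p * Sseq x p (Suc n) = (1 - x) * (p * (1 / p + (x / p) * Q))"
      unfolding Sseq_def e by simp
    also have "\<dots> = (1 - x) * (1 + x * Q)" using p by (simp add: field_simps)
    also have "\<dots> = (1 - x) + x * Sseq x p n" unfolding Sseq_def Q_def by (simp add: algebra_simps)
    finally show ?thesis .
  qed
  have "Tseq x A (Suc n) = x * Tseq x A n + (1 - x) * A n" by simp
  also have "\<dots> \<le> x * (A n * Sseq x p n) + (1 - x) * A n"
    using IH x by (intro add_right_mono mult_left_mono) auto
  also have "\<dots> = A n * (p * Sseq x p (Suc n))" by (simp add: key algebra_simps)
  also have "\<dots> \<le> A n * (ph (Suc n) * Sseq x p (Suc n))"
    using A0 S0 pn by (intro mult_left_mono mult_right_mono) auto
  also have "\<dots> = A (Suc n) * Sseq x p (Suc n)" by (simp add: AS)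
  finally show ?case unfolding A_def .
qed



definition hk :: "nat \<Rightarrow> real \<Rightarrow> real" where "hk k t = t ^ k - t ^ (k+1)"

definition ck :: "nat \<Rightarrow> real" where "ck k = real k / (real k + 1)"

lemma ck_bounds: "1 \<le> k \<Longrightarrow> 0 < ck k \<and> ck k < 1"
  unfolding ck_def by (auto simp: field_simps)

lemma hk_deriv: "DERIV (hk k) t :> (real k * t ^ (k-1) - (real k + 1) * t ^ k)"
proof -
  have "DERIV (\<lambda>t. t ^ k - t ^ (k+1)) t :> (real k * t ^ (k - Suc 0) - real (k+1) * t ^ (k+1 - Suc 0))"
    by (intro DERIV_diff DERIV_pow)
  then show ?thesis unfolding hk_def by (simp add: add.commute)
qed

lemma hk_cont: "continuous_on S (hk k)"
  unfolding hk_def by (intro continuous_intros)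

lemma hk_nonneg: "0 \<le> t \<Longrightarrow> t \<le> 1 \<Longrightarrow> 0 \<le> hk k t"
  unfolding hk_def
proof -
  assume "0 \<le> t" "t \<le> 1"
  then have "0 \<le> t ^ k * (1 - t)" by simp
  then show "0 \<le> t ^ k - t ^ (k+1)" by (simp add: algebra_simps)
qed

lemma hk_inc:
  assumes k: "1 \<le> k" and "0 \<le> a" "a < b" "b \<le> ck k"
  shows "hk k a < hk k b"
proof (rule DERIV_pos_imp_increasing_open[OF \<open>a < b\<close> _ hk_cont])
  fix t assume t: "a < t" "t < b"
  then have t0: "0 < t" and tc: "t < ck k" using assms by auto
  have "(real k + 1) * t < real k" using tc unfolding ck_def by (simp add: field_simps)
  moreover have "t ^ k = t ^ (k-1) * t" using k by (metis Suc_diff_le diff_Suc_1 power_Suc2)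
  moreover have "0 < t ^ (k-1)" using t0 by simp
  ultimately have "0 < real k * t ^ (k-1) - (real k + 1) * t ^ k"
    by (smt (verit, ccfv_SIG) mult.commute mult.left_commute mult_less_cancel_left_pos)
  then show "\<exists>y. DERIV (hk k) t :> y \<and> 0 < y" using hk_deriv by blast
qed

lemma hk_dec:
  assumes k: "1 \<le> k" and "ck k \<le> a" "a < b" "b \<le> 1"
  shows "hk k b < hk k a"
proof (rule DERIV_neg_imp_decreasing_open[OF \<open>a < b\<close> _ hk_cont])
  fix t assume t: "a < t" "t < b"
  then have t0: "0 < t" and tc: "ck k < t" using assms ck_bounds[OF k] by auto
  have "real k < (real k + 1) * t" using tc unfolding ck_def by (simp add: field_simps)
  moreover have "t ^ k = t ^ (k-1) * t" using k by (metis Suc_diff_le diff_Suc_1 power_Suc2)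
  moreover have "0 < t ^ (k-1)" using t0 by simp
  ultimately have "real k * t ^ (k-1) - (real k + 1) * t ^ k < 0"
    by (smt (verit, ccfv_SIG) mult.commute mult.left_commute mult_less_cancel_left_pos)
  then show "\<exists>y. DERIV (hk k) t :> y \<and> y < 0" using hk_deriv by blast
qed

lemma hk_inc_le: "1 \<le> k \<Longrightarrow> 0 \<le> a \<Longrightarrow> a \<le> b \<Longrightarrow> b \<le> ck k \<Longrightarrow> hk k a \<le> hk k b"
  using hk_inc by (cases "a = b") (auto intro: less_imp_le)

lemma hk_dec_le: "1 \<le> k \<Longrightarrow> ck k \<le> a \<Longrightarrow> a \<le> b \<Longrightarrow> b \<le> 1 \<Longrightarrow> hk k b \<le> hk k a"
  using hk_dec by (cases "a = b") (auto intro: less_imp_le)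

lemma hk_inj1: "1 \<le> k \<Longrightarrow> 0 \<le> a \<Longrightarrow> a \<le> ck k \<Longrightarrow> 0 \<le> b \<Longrightarrow> b \<le> ck k \<Longrightarrow> hk k a = hk k b \<Longrightarrow> a = b"
  using hk_inc by (metis linorder_neqE_linordered_idom order_less_irrefl)

lemma hk_inj2: "1 \<le> k \<Longrightarrow> ck k \<le> a \<Longrightarrow> a \<le> 1 \<Longrightarrow> ck k \<le> b \<Longrightarrow> b \<le> 1 \<Longrightarrow> hk k a = hk k b \<Longrightarrow> a = b"
  using hk_dec by (metis linorder_neqE_linordered_idom order_less_irrefl)

lemma hk_max: "1 \<le> k \<Longrightarrow> 0 \<le> t \<Longrightarrow> t \<le> 1 \<Longrightarrow> hk k t \<le> hk k (ck k)"
  using hk_inc_le[of k t "ck k"] hk_dec_le[of k "ck k" t] ck_bounds[of k]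
  by (cases "t \<le> ck k") auto

lemma hk_lt_max: "1 \<le> k \<Longrightarrow> 0 \<le> t \<Longrightarrow> t \<le> 1 \<Longrightarrow> t \<noteq> ck k \<Longrightarrow> hk k t < hk k (ck k)"
  using hk_inc[of k t "ck k"] hk_dec[of k "ck k" t] ck_bounds[of k]
  by (cases "t \<le> ck k") auto

lemma hk_0: "1 \<le> k \<Longrightarrow> hk k 0 = 0" unfolding hk_def by simp
lemma hk_1: "hk k 1 = 0" unfolding hk_def by simp

definition gk :: "nat \<Rightarrow> real \<Rightarrow> real" where
  "gk k x = (if 0 \<le> x \<and> x \<le> 1 then
     (if x \<le> ck k then (SOME t. ck k \<le> t \<and> t \<le> 1 \<and> hk k t = hk k x)
      else (SOME t. 0 \<le> t \<and> t \<le> ck k \<and> hk k t = hk k x)) else 0)"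

lemma gk_low:
  assumes k: "1 \<le> k" and x: "0 \<le> x" "x \<le> ck k"
  shows "ck k \<le> gk k x \<and> gk k x \<le> 1 \<and> hk k (gk k x) = hk k x"
proof -
  have c: "0 < ck k" "ck k < 1" using ck_bounds[OF k] by auto
  have "\<exists>t. ck k \<le> t \<and> t \<le> 1 \<and> hk k t = hk k x"
    using IVT2'[of "hk k" 1 "hk k x" "ck k", OF _ _ _ hk_cont] hk_1 hk_nonneg[of x k] hk_max[OF k, of x] x c
    by auto
  then have "ck k \<le> (SOME t. ck k \<le> t \<and> t \<le> 1 \<and> hk k t = hk k x) \<and> (SOME t. ck k \<le> t \<and> t \<le> 1 \<and> hk k t = hk k x) \<le> 1 \<and> hk k (SOME t. ck k \<le> t \<and> t \<le> 1 \<and> hk k t = hk k x) = hk k x"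
    by (rule someI_ex)
  moreover have "gk k x = (SOME t. ck k \<le> t \<and> t \<le> 1 \<and> hk k t = hk k x)"
    unfolding gk_def using x c by auto
  ultimately show ?thesis by simp
qed

lemma gk_high:
  assumes k: "1 \<le> k" and x: "ck k \<le> x" "x \<le> 1"
  shows "0 \<le> gk k x \<and> gk k x \<le> ck k \<and> hk k (gk k x) = hk k x"
proof (cases "x = ck k")
  case True
  then show ?thesis using gk_low[OF k, of x] ck_bounds[OF k] hk_inj2[OF k, of "gk k x" x] by auto
next
  case False
  have c: "0 < ck k" "ck k < 1" using ck_bounds[OF k] by auto
  have "\<exists>t. 0 \<le> t \<and> t \<le> ck k \<and> hk k t = hk k x"
    using IVT'[of "hk k" 0 "hk k x" "ck k", OF _ _ _ hk_cont] hk_0[OF k] hk_nonneg[of x k] hk_max[OF k, of x] x c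
    by auto
  then have "0 \<le> (SOME t. 0 \<le> t \<and> t \<le> ck k \<and> hk k t = hk k x) \<and> (SOME t. 0 \<le> t \<and> t \<le> ck k \<and> hk k t = hk k x) \<le> ck k \<and> hk k (SOME t. 0 \<le> t \<and> t \<le> ck k \<and> hk k t = hk k x) = hk k x"
    by (rule someI_ex)
  moreover have "gk k x = (SOME t. 0 \<le> t \<and> t \<le> ck k \<and> hk k t = hk k x)"
    unfolding gk_def using x c False by auto
  ultimately show ?thesis by simp
qed

lemma gk_range: "1 \<le> k \<Longrightarrow> 0 \<le> x \<Longrightarrow> x \<le> 1 \<Longrightarrow> 0 \<le> gk k x \<and> gk k x \<le> 1 \<and> hk k (gk k x) = hk k x"
  using gk_low[of k x] gk_high[of k x] ck_bounds[of k] by (cases "x \<le> ck k") auto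

lemma gk_anti:
  assumes k: "1 \<le> k" and "0 \<le> a" "a \<le> b" "b \<le> 1"
  shows "gk k b \<le> gk k a"
proof -
  consider "b \<le> ck k" | "ck k \<le> a" | "a \<le> ck k" "ck k \<le> b" by linarith
  then show ?thesis
  proof cases
    case 1
    have ga: "ck k \<le> gk k a \<and> gk k a \<le> 1 \<and> hk k (gk k a) = hk k a" using gk_low[OF k, of a] 1 assms by auto
    have gb: "ck k \<le> gk k b \<and> gk k b \<le> 1 \<and> hk k (gk k b) = hk k b" using gk_low[OF k, of b] 1 assms by auto
    have "hk k a \<le> hk k b" using hk_inc_le[OF k, of a b] 1 assms by auto
    show ?thesis
    proof (rule ccontr)
      assume "\<not> gk k b \<le> gk k a"
      then have "hk k (gk k b) < hk k (gk k a)" using ga gb hk_dec[OF k, of "gk k a" "gk k b"] by simp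
      then show False using ga gb \<open>hk k a \<le> hk k b\<close> by simp
    qed
  next
    case 2
    have ga: "0 \<le> gk k a \<and> gk k a \<le> ck k \<and> hk k (gk k a) = hk k a" using gk_high[OF k, of a] 2 assms by auto
    have gb: "0 \<le> gk k b \<and> gk k b \<le> ck k \<and> hk k (gk k b) = hk k b" using gk_high[OF k, of b] 2 assms by auto
    have "hk k b \<le> hk k a" using hk_dec_le[OF k, of a b] 2 assms by auto
    show ?thesis
    proof (rule ccontr)
      assume "\<not> gk k b \<le> gk k a"
      then have "hk k (gk k a) < hk k (gk k b)" using ga gb hk_inc[OF k, of "gk k a" "gk k b"] by simp
      then show False using ga gb \<open>hk k b \<le> hk k a\<close> by simp
    qed
  next
    case 3
    then show ?thesis using gk_low[OF k, of a] gk_high[OF k, of b] assms by auto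
  qed
qed

definition Pk :: "nat \<Rightarrow> (real \<Rightarrow> real) \<Rightarrow> bool" where
  "Pk k g = ((\<forall>x\<in>{0..1}. g x \<in> {0..1} \<and> g x ^ k - g x ^ (k+1) = x ^ k - x ^ (k+1))
                 \<and> antimono_on {0..1} g \<and> (\<forall>x. x \<notin> {0..1} \<longrightarrow> g x = 0))"

lemma Pk_gk: "1 \<le> k \<Longrightarrow> Pk k (gk k)"
  unfolding Pk_def
proof (intro conjI ballI allI impI)
  assume k: "1 \<le> k"
  fix x :: real assume "x \<in> {0..1}"
  then show "gk k x \<in> {0..1}" "gk k x ^ k - gk k x ^ (k+1) = x ^ k - x ^ (k+1)"
    using gk_range[OF k, of x] unfolding hk_def by auto
next
  assume k: "1 \<le> k"
  show "antimono_on {0..1} (gk k)"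
    unfolding monotone_on_def using gk_anti[OF k] by auto
next
  fix x :: real assume "x \<notin> {0..1}"
  then show "gk k x = 0" unfolding gk_def by auto
qed

lemma Pk_unique:
  assumes k: "1 \<le> k" and P: "Pk k g"
  shows "g = gk k"
proof
  fix x :: real
  have hg: "\<And>t. 0 \<le> t \<Longrightarrow> t \<le> 1 \<Longrightarrow> 0 \<le> g t \<and> g t \<le> 1 \<and> hk k (g t) = hk k t"
    using P unfolding Pk_def hk_def by auto
  have an: "\<And>a b. 0 \<le> a \<Longrightarrow> a \<le> b \<Longrightarrow> b \<le> 1 \<Longrightarrow> g b \<le> g a"
    using P unfolding Pk_def monotone_on_def by auto
  have c: "0 < ck k" "ck k < 1" using ck_bounds[OF k] by auto
  show "g x = gk k x"
  proof (cases "0 \<le> x \<and> x \<le> 1")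
    case False
    then show ?thesis using P unfolding Pk_def gk_def by auto
  next
    case True
    consider "x < ck k" | "x = ck k" | "x > ck k" by linarith
    then show ?thesis
    proof cases
      case 1
      have low: "ck k \<le> g x"
      proof (rule ccontr)
        assume "\<not> ck k \<le> g x"
        then have "g x = x" using hk_inj1[OF k, of "g x" x] hg[of x] True 1 by auto
        define b where "b = (x + ck k) / 2"
        have b: "x < b" "b < ck k" using 1 unfolding b_def by auto
        have "g b \<le> x" using an[of x b] \<open>g x = x\<close> True b c by auto
        moreover have "g b = b" using hk_inj1[OF k, of "g b" b] hg[of b] True b c \<open>g b \<le> x\<close> by auto
        ultimately show False using b by auto
      qed
      then show ?thesis using hk_inj2[OF k, of "g x" "gk k x"] hg[of x] gk_low[OF k, of x] True 1 by auto
    next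
      case 2
      have "g x = ck k" using hk_lt_max[OF k, of "g x"] hg[of x] True 2 by fastforce
      moreover have "gk k x = ck k" using hk_lt_max[OF k, of "gk k x"] gk_range[OF k, of x] True 2 by fastforce
      ultimately show ?thesis by simp
    next
      case 3
      have high: "g x \<le> ck k"
      proof (rule ccontr)
        assume "\<not> g x \<le> ck k"
        then have "g x = x" using hk_inj2[OF k, of "g x" x] hg[of x] True 3 by auto
        define b where "b = (x + ck k) / 2"
        have b: "b < x" "ck k < b" using 3 unfolding b_def by auto
        have "x \<le> g b" using an[of b x] \<open>g x = x\<close> True b c by auto
        moreover have "g b = b" using hk_inj2[OF k, of "g b" b] hg[of b] True b c \<open>x \<le> g b\<close> by auto
        ultimately show False using b by auto
      qed
      then show ?thesis using hk_inj1[OF k, of "g x" "gk k x"] hg[of x] gk_high[OF k, of x] True 3 by auto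
    qed
  qed
qed

lemma fk_eq: "1 \<le> k \<Longrightarrow> fk k = gk k"
  unfolding fk_def using Pk_gk Pk_unique unfolding Pk_def
  by (intro the_equality) blast+



lemma chain_mono:
  fixes y :: "nat \<Rightarrow> real"
  assumes step: "\<And>i. 1 \<le> i \<Longrightarrow> i < N \<Longrightarrow> y i \<le> y (i+1)"
    and "1 \<le> a" "a \<le> b" "b \<le> N"
  shows "y a \<le> y b"
proof -
  have "b \<le> N \<longrightarrow> y a \<le> y b" using \<open>a \<le> b\<close>
  proof (induction b rule: dec_induct)
    case base then show ?case by simp
  next
    case (step n)
    then show ?case using assms(1)[of n] \<open>1 \<le> a\<close> by auto
  qed
  then show ?thesis using assms by auto
qed

lemma Sseq_k:
  assumes k: "1 \<le> k" and x: "0 \<le> x" "x < 1" and p: "0 < p"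
    and hp: "p ^ k - p ^ (k+1) = x ^ k - x ^ (k+1)"
    and px: "p = x \<Longrightarrow> x = ck k"
  shows "Sseq x p k = 1"
proof (cases "p = x")
  case True
  then have xc: "x = ck k" using px by simp
  have x0: "0 < x" using True p by simp
  have "(\<Sum>m<k. x ^ m / p ^ (m+1)) = (\<Sum>m<k. 1 / x)"
    using True x0 by (intro sum.cong) (auto simp: field_simps)
  then have "Sseq x p k = (1 - x) * real k / x" unfolding Sseq_def by simp
  also have "\<dots> = 1" using xc k x0 unfolding ck_def by (simp add: field_simps)
  finally show ?thesis .
next
  case False
  define r where "r = x / p"
  have r1: "r \<noteq> 1" using False p unfolding r_def by auto
  have "(\<Sum>m<k. x ^ m / p ^ (m+1)) = (\<Sum>m<k. r ^ m) / p"
    unfolding r_def using p by (simp add: sum_divide_distrib power_divide mult.commute)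
  also have "\<dots> = (r ^ k - 1) / (r - 1) / p" using geometric_sum[OF r1] by simp
  finally have e: "(\<Sum>m<k. x ^ m / p ^ (m+1)) = (r ^ k - 1) / (r - 1) / p" .
  have rk: "r ^ k = x ^ k / p ^ k" unfolding r_def by (simp add: power_divide)
  have d: "(r - 1) * p = x - p" unfolding r_def using p by (simp add: field_simps)
  have dn: "x - p \<noteq> 0" using False by simp
  have num: "(1 - x) * (r ^ k - 1) * p ^ k = (x - p) * p ^ k"
  proof -
    have "(1 - x) * (r ^ k - 1) * p ^ k = (1 - x) * x ^ k - (1 - x) * p ^ k"
      unfolding rk using p by (simp add: field_simps)
    also have "\<dots> = (x ^ k - x ^ (k+1)) - (1 - x) * p ^ k" by (simp add: algebra_simps)
    also have "\<dots> = (p ^ k - p ^ (k+1)) - (1 - x) * p ^ k" using hp by simp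
    also have "\<dots> = (x - p) * p ^ k" by (simp add: algebra_simps)
    finally show ?thesis by simp
  qed
  then have num2: "(1 - x) * (r ^ k - 1) = x - p" using p by simp
  have "Sseq x p k = (1 - x) * (r ^ k - 1) / ((r - 1) * p)" unfolding Sseq_def e by simp
  also have "\<dots> = 1" unfolding num2 d using dn by simp
  finally show ?thesis .
qed

lemma Sseq_mono:
  assumes "0 \<le> x" "x \<le> 1" "0 < p" "j \<le> k"
  shows "Sseq x p j \<le> Sseq x p k"
  unfolding Sseq_def using assms
  by (intro mult_left_mono sum_mono2) auto

theorem mainTheorem6:
  fixes k :: nat and y :: "nat \<Rightarrow> real"
  assumes "k \<ge> 1"
    and "0 \<le> y 1"
    and "\<And>i. 1 \<le> i \<Longrightarrow> i < 2*k-1 \<Longrightarrow> y i \<le> y (i+1)"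
    and "y (2*k-1) \<le> 1"
  shows "Htilde k y \<le> 0"
proof -
  have k: "1 \<le> k" using assms(1) .
  have mono: "\<And>a b. 1 \<le> a \<Longrightarrow> a \<le> b \<Longrightarrow> b \<le> 2*k-1 \<Longrightarrow> y a \<le> y b"
    using chain_mono[of "2*k-1" y, OF assms(3)] by blast
  have rng: "\<And>i. 1 \<le> i \<Longrightarrow> i \<le> 2*k-1 \<Longrightarrow> 0 \<le> y i \<and> y i \<le> 1"
  proof -
    fix i :: nat assume i: "1 \<le> i" "i \<le> 2*k-1"
    have "y 1 \<le> y i" using mono[of 1 i] i by simp
    moreover have "y i \<le> y (2*k-1)" using mono[of i "2*k-1"] i by simp
    ultimately show "0 \<le> y i \<and> y i \<le> 1" using assms(2,4) by simp
  qed
  define x where "x = y k"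
  have x: "0 \<le> x" "x \<le> 1" unfolding x_def using rng[of k] k by auto
  define ph where "ph = (\<lambda>i. gk k (y i))"
  define p where "p = gk k x"
  define A where "A = (\<lambda>j. \<Prod>i=1..j. ph i)"
  define z where "z = (\<lambda>i. y (k+i))"
  have php: "\<And>i. 1 \<le> i \<Longrightarrow> i \<le> k \<Longrightarrow> p \<le> ph i"
    unfolding ph_def p_def x_def using gk_anti[OF k] rng mono k by auto
  have p: "0 \<le> p" "p \<le> 1" "hk k p = hk k x" unfolding p_def using gk_range[OF k x] by auto
  have A0: "\<And>j. j \<le> k \<Longrightarrow> 0 \<le> A j"
    unfolding A_def
  proof (intro prod_nonneg)
    fix j i assume "j \<le> k" "i \<in> {1..j}"
    then show "0 \<le> ph i" using php[of i] p(1) by auto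
  qed
  have TA: "\<And>j. j \<le> k \<Longrightarrow> Tseq x A j \<le> A j"
  proof (cases "x = 1")
    case True
    have "\<And>j. Tseq x A j = 0" by (induct_tac j) (simp_all add: True)
    then show "\<And>j. j \<le> k \<Longrightarrow> Tseq x A j \<le> A j" using A0 by simp
  next
    case False
    then have x1: "x < 1" using x by simp
    have ppos: "0 < p"
    proof (cases "x \<le> ck k")
      case True
      then show ?thesis using gk_low[OF k x(1) True] ck_bounds[OF k] unfolding p_def by auto
    next
      case False
      have "hk k 1 < hk k x" using hk_dec[OF k, of x 1] False x1 by simp
      then have "0 < hk k p" using p hk_1 by simp
      then have "p \<noteq> 0" using hk_0[OF k] by auto
      then show ?thesis using p by simp
    qed
    have hp: "p ^ k - p ^ (k+1) = x ^ k - x ^ (k+1)" using p(3) unfolding hk_def .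
    have px: "p = x \<Longrightarrow> x = ck k"
    proof -
      assume "p = x"
      show "x = ck k"
      proof (rule ccontr)
        assume "x \<noteq> ck k"
        then consider "x < ck k" | "ck k < x" by linarith
        then show False
        proof cases
          case 1 then show False using gk_low[OF k x(1)] \<open>p = x\<close> unfolding p_def by force
        next
          case 2 then show False using gk_high[OF k _ x(2)] \<open>p = x\<close> unfolding p_def by force
        qed
      qed
    qed
    have S1: "Sseq x p k = 1" using Sseq_k[OF k x(1) x1 ppos hp px] .
    show "\<And>j. j \<le> k \<Longrightarrow> Tseq x A j \<le> A j"
    proof -
      fix j assume j: "j \<le> k"
      have "Tseq x A j \<le> A j * Sseq x p j"
        unfolding A_def using T_le_AS[OF ppos x, of j ph] php j by auto
      also have "\<dots> \<le> A j * 1"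
        using Sseq_mono[OF x ppos j] S1 A0[OF j] by (intro mult_left_mono) auto
      finally show "Tseq x A j \<le> A j" by simp
    qed
  qed
  have zb: "\<And>i. i < k \<Longrightarrow> x \<le> z i \<and> z i \<le> 1"
  proof -
    fix i assume i: "i < k"
    then have "k + i \<le> 2*k-1" by simp
    then show "x \<le> z i \<and> z i \<le> 1"
      unfolding z_def x_def using mono[of k "k+i"] rng[of "k+i"] k by simp
  qed
  have D: "Dsum z A k \<le> Tseq x A k"
    by (rule Dsum_le_T[OF zb _ x(1)]) (use TA in auto)
  have H: "Htilde k y = Dsum z A k - A k"
  proof -
    have fk: "fk k = gk k" by (rule fk_eq[OF k])
    have s1: "{0..k-1} = {..<k}" using k by auto
    have pr: "\<And>i. i < k \<Longrightarrow> (\<Prod>j=k+i+1..2*k-1. y j) = (\<Prod>m\<in>{i+1..<k}. z m)"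
    proof -
      fix i assume i: "i < k"
      have "{k+i+1..2*k-1} = {(i+1)+k..<k+k}" using k by auto
      then have "(\<Prod>j=k+i+1..2*k-1. y j) = (\<Prod>j\<in>{(i+1)+k..<k+k}. y j)" by simp
      also have "\<dots> = (\<Prod>m\<in>{i+1..<k}. y (m+k))" by (rule prod.shift_bounds_nat_ivl)
      finally show "(\<Prod>j=k+i+1..2*k-1. y j) = (\<Prod>m\<in>{i+1..<k}. z m)"
        unfolding z_def by (simp add: add.commute)
    qed
    show ?thesis
      unfolding Htilde_def Dsum_def s1 fk
    proof (intro arg_cong2[where f="(-)"] sum.cong refl)
      fix i assume "i \<in> {..<k}"
      then have i: "i < k" by simp
      show "(1 - y (k + i)) * (\<Prod>j = k + i + 1..2 * k - 1. y j) * (\<Prod>j = 1..i. gk k (y j)) =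
            (1 - z i) * (\<Prod>m\<in>{i+1..<k}. z m) * A i"
        unfolding pr[OF i] A_def ph_def z_def by simp
    next
      show "(\<Prod>i = 1..k. gk k (y i)) = A k" unfolding A_def ph_def by simp
    qed
  qed
  show ?thesis using H D TA[of k] by simp
qed

end
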